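(* Let $S$ be a Stone relation algebra and let $C : S\to\mathbb{N}\cup\{\infty\}$ map each $x$ to the number of atoms below $x$. Then: 1. If $S$ is atomic, atom-rectangular and simple, then for all $x\in S$: $x$ is an atom $\iff C(x)=1$. 2. If $S$ is an atomic relation algebra, then for all $x\in S$: $x$ is an atom $\iff C(x)=1$. 3. If $S$ is atom-rectangular, then $C(\top)\le C(1)^2$. 4. If $S$ is atomic and simple with finitely many atoms, then $C(\top)\ge C(1)^2$. 5. If $S$ is atom-rectangular and atom-simple, then $C(\top)=C(1)^2$. 6. If $S$ has finitely many atoms, then $C(\top)\neq\infty$.
   Context: A Stone relation algebra is a structure $(S,\sqcup,\sqcap,\cdot,\overline{\,\cdot\,},{}^{\smile},\bot,\top,1)$ (write $xy$ for $x\cdot y$, $\overline{x}$ for the pseudocomplement, $x^{\smile}$ for the converse) such that: $(S,\sqcup,\sqcap,\bot,\top)$ is a bounded distributive lattice with order $x\sqsubseteq y\iff x\sqcup y=y$; $x\sqcap y=\bot\iff x\sqsubseteq\overline{y}$; $\overline{x}\sqcup\overline{\overline{x}}=\top$; $\cdot$ is associative with two-sided unit $1$, distributes over $\sqcup$ on both sides, and $\bot$ is a zero of $\cdot$; $x^{\smile\smile}=x$, $(xy)^{\smile}=y^{\smile}x^{\smile}$, $(x\sqcup y)^{\smile}=x^{\smile}\sqcup y^{\smile}$; $\overline{\overline{1}}=1$; $\overline{\overline{xy}}=\overline{\overline{x}}\,\overline{\overline{y}}$; $xy\sqcap z\sqsubseteq x(y\sqcap x^{\smile}z)$. A relation algebra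 is a Stone relation algebra with $\overline{\overline{x}}=x$ for all $x$. An atom is an element $x\neq\bot$ such that $\bot\neq y\sqsubseteq x$ implies $y=x$. An element $x$ is a rectangle if $x\top x\sqsubseteq x$, and simple if $\top x\top=\top$. $S$ is simple if every element other than $\bot$ is simple; atomic if every $x\neq\bot$ has an atom below it; atom-rectangular if every atom is a rectangle; atom-simple if every atom is simple. Here $\infty^2=\infty$ and $n\le\infty$. *)

theory Defs
  imports Main "HOL-Library.Extended_Nat"
begin

class stone_relation_algebra = bounded_lattice + distrib_lattice + monoid_mult + uminus +
  fixes conv :: "'a \<Rightarrow> 'a"
  assumes pseudo_complement: "inf x y = bot \<longleftrightarrow> x \<le> - y"
  and stone: "sup (- x) (- (- x)) = top"
  and mult_sup_distl: "x * sup y z = sup (x * y) (x * z)"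
  and mult_sup_distr: "sup x y * z = sup (x * z) (y * z)"
  and mult_bot_left: "bot * x = bot"
  and mult_bot_right: "x * bot = bot"
  and conv_involutive: "conv (conv x) = x"
  and conv_mult: "conv (x * y) = conv y * conv x"
  and conv_sup: "conv (sup x y) = sup (conv x) (conv y)"
  and pp_one: "- (- 1) = (1::'a)"
  and pp_mult: "- (- (x * y)) = (- (- x)) * (- (- y))"
  and dedekind_1: "inf (x * y) z \<le> x * inf y (conv x * z)"

context stone_relation_algebra
begin

definition atom :: "'a \<Rightarrow> bool" where
  "atom x \<longleftrightarrow> x \<noteq> bot \<and> (\<forall>y. y \<noteq> bot \<and> y \<le> x \<longrightarrow> y = x)"

definition rectangle :: "'a \<Rightarrow> bool" where
  "rectangle x \<longleftrightarrow> x * top * x \<le> x"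

definition simple :: "'a \<Rightarrow> bool" where
  "simple x \<longleftrightarrow> top * x * top = top"

definition atom_count :: "'a \<Rightarrow> enat" where
  "atom_count x = (if finite {a. atom a \<and> a \<le> x} then enat (card {a. atom a \<and> a \<le> x}) else \<infinity>)"

end

definition atomic_alg :: "'a::stone_relation_algebra itself \<Rightarrow> bool" where
  "atomic_alg _ \<longleftrightarrow> (\<forall>x::'a. x \<noteq> bot \<longrightarrow> (\<exists>a. atom a \<and> a \<le> x))"

definition atom_rectangular :: "'a::stone_relation_algebra itself \<Rightarrow> bool" where
  "atom_rectangular _ \<longleftrightarrow> (\<forall>a::'a. atom a \<longrightarrow> rectangle a)"

definition atom_simple :: "'a::stone_relation_algebra itself \<Rightarrow> bool" where
  "atom_simple _ \<longleftrightarrow> (\<forall>a::'a. atom a \<longrightarrow> simple a)"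

definition simple_alg :: "'a::stone_relation_algebra itself \<Rightarrow> bool" where
  "simple_alg _ \<longleftrightarrow> (\<forall>x::'a. x \<noteq> bot \<longrightarrow> simple x)"

definition relation_algebra :: "'a::stone_relation_algebra itself \<Rightarrow> bool" where
  "relation_algebra _ \<longleftrightarrow> (\<forall>x::'a. - (- x) = x)"

definition finitely_many_atoms :: "'a::stone_relation_algebra itself \<Rightarrow> bool" where
  "finitely_many_atoms _ \<longleftrightarrow> finite {a::'a. atom a}"

end

theory Submission
  imports Defs
begin

context stone_relation_algebra
begin

lemma mr_iso: "x \<le> y \<Longrightarrow> z * x \<le> z * y"
  by (metis le_iff_sup mult_sup_distl)
lemma ml_iso: "x \<le> y \<Longrightarrow> x * z \<le> y * z"
  by (metis le_iff_sup mult_sup_distr)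
lemma m_iso: "x \<le> y \<Longrightarrow> z \<le> w \<Longrightarrow> x * z \<le> y * w"
  by (meson ml_iso mr_iso order_trans)
lemma conv_iso: "x \<le> y \<Longrightarrow> conv x \<le> conv y"
  by (metis conv_sup le_iff_sup)
lemma conv_order: "conv x \<le> conv y \<longleftrightarrow> x \<le> y"
  by (metis conv_iso conv_involutive)
lemma conv_bot: "conv bot = bot"
  by (metis bot.extremum bot.extremum_uniqueI conv_involutive conv_iso)
lemma conv_top: "conv top = top"
  by (metis conv_involutive conv_iso top.extremum top.extremum_uniqueI)
lemma conv_inf: "conv (inf x y) = inf (conv x) (conv y)"
proof (rule order.antisym)
  show "conv (inf x y) \<le> inf (conv x) (conv y)" by (simp add: conv_iso)
  have "conv (inf (conv x) (conv y)) \<le> inf x y"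
    by (metis conv_involutive conv_iso inf.cobounded1 inf.cobounded2 le_inf_iff)
  then show "inf (conv x) (conv y) \<le> conv (inf x y)"
    by (metis conv_involutive conv_iso)
qed
lemma conv_one: "conv 1 = 1"
  by (metis conv_involutive conv_mult mult_1_left)
lemma dedekind_2: "inf (x * y) z \<le> inf x (z * conv y) * y"
proof -
  have "conv (inf (x * y) z) = inf (conv y * conv x) (conv z)"
    by (simp add: conv_inf conv_mult)
  also have "\<dots> \<le> conv y * inf (conv x) (y * conv z)"
    using dedekind_1[of "conv y" "conv x" "conv z"] by (simp add: conv_involutive)
  also have "\<dots> = conv (inf x (z * conv y) * y)"
    by (simp add: conv_inf conv_mult conv_involutive)
  finally show ?thesis using conv_order by blast
qed

lemma pp_inc: "x \<le> - (- x)"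
proof -
  have "inf (- x) x = bot" using pseudo_complement[of "- x" x] by simp
  then show ?thesis using pseudo_complement[of x "- x"] by (simp add: inf.commute)
qed
lemma p_anti: "x \<le> y \<Longrightarrow> - y \<le> - x"
  by (metis inf.absorb_iff2 inf.commute inf.left_commute pp_inc pseudo_complement)
lemma pp_iso: "x \<le> y \<Longrightarrow> - (- x) \<le> - (- y)"
  by (simp add: p_anti)
lemma pp_top: "- (- top) = top"
  by (simp add: pp_inc top.extremum_uniqueI)
lemma inf_p: "inf x (- x) = bot"
  using pp_inc pseudo_complement by blast
lemma top_top: "top * top = top"
  by (metis mr_iso mult_1_right top.extremum top.extremum_uniqueI)

lemma x_le_xcx: "x \<le> x * conv x * x"
proof -
  have "inf (x * 1) x \<le> x * inf 1 (conv x * x)" by (rule dedekind_1)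
  also have "\<dots> \<le> x * (conv x * x)" by (simp add: mr_iso)
  finally show ?thesis by (simp add: mult.assoc)
qed

lemma conv_le_one: "p \<le> 1 \<Longrightarrow> conv p \<le> 1"
  using conv_iso conv_one by fastforce

lemma dom_le: "p \<le> 1 \<Longrightarrow> inf 1 (p * top) \<le> p"
proof -
  assume p: "p \<le> 1"
  have "inf (p * top) 1 \<le> p * inf top (conv p * 1)" by (rule dedekind_1)
  also have "\<dots> \<le> p * 1" using mr_iso[OF conv_le_one[OF p], of p] by simp
  finally show ?thesis by (simp add: inf.commute)
qed

lemma cod_le: "p \<le> 1 \<Longrightarrow> inf 1 (top * p) \<le> p"
proof -
  assume p: "p \<le> 1"
  have "inf (top * p) 1 \<le> inf top (1 * conv p) * p" by (rule dedekind_2)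
  also have "\<dots> \<le> 1 * p" using ml_iso[OF conv_le_one[OF p], of p] by simp
  finally show ?thesis by (simp add: inf.commute)
qed

lemma le_xtop: "x \<le> x * top"
  by (metis mr_iso mult_1_right top_greatest)
lemma le_topx: "x \<le> top * x"
  by (metis ml_iso mult_1_left top_greatest)

lemma regular_coreflexive:
  assumes p1: "p \<le> 1" and pr: "p * top * p \<le> p" and ps: "top * p * top = top"
  shows "- (- p) \<le> p"
proof -
  let ?x = "- (- p)"
  have ppx: "?x \<le> 1" using pp_iso[OF p1] pp_one by simp
  have r: "?x * top * p \<le> 1"
  proof -
    have "?x * top * p \<le> ?x * - (- top) * - (- p)"
      using m_iso pp_top pp_inc by simp
    also have "\<dots> = - (- (p * top * p))" by (simp add: pp_mult)
    also have "\<dots> \<le> ?x" using pp_iso[OF pr] .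
    finally show ?thesis using ppx by simp
  qed
  have r2: "?x * top * p \<le> p"
  proof -
    have "?x * top * p \<le> top * p"
      by (simp add: ml_iso)
    then have "?x * top * p \<le> inf 1 (top * p)" using r by simp
    then show ?thesis using cod_le[OF p1] by (meson order_trans)
  qed
  have l: "p * top * ?x \<le> 1"
  proof -
    have "p * top * ?x \<le> - (- p) * - (- top) * ?x"
      using m_iso pp_top pp_inc by simp
    also have "\<dots> = - (- (p * top * p))" by (simp add: pp_mult)
    also have "\<dots> \<le> ?x" using pp_iso[OF pr] .
    finally show ?thesis using ppx by simp
  qed
  have l2: "p * top * ?x \<le> p"
  proof -
    have "p * top * ?x \<le> p * top"
      by (metis mult.assoc mr_iso top_greatest)
    then have "p * top * ?x \<le> inf 1 (p * top)" using l by simp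
    then show ?thesis using dom_le[OF p1] by (meson order_trans)
  qed
  have "?x \<le> ?x * conv ?x * ?x" by (rule x_le_xcx)
  also have "\<dots> \<le> ?x * top * ?x" using m_iso by simp
  also have "\<dots> = ?x * top * p * top * ?x" using ps by (simp add: mult.assoc)
  also have "\<dots> \<le> p * top * ?x" using ml_iso[OF r2] by (simp add: mult.assoc)
  also have "\<dots> \<le> p" by (rule l2)
  finally show ?thesis .
qed

lemma vec_dom: "inf 1 (a * top) * top = a * top"
proof (rule order.antisym)
  show "inf 1 (a * top) * top \<le> a * top"
    by (metis inf.cobounded2 ml_iso mult.assoc top_top)
  have "inf (1 * a) a \<le> inf 1 (a * conv a) * a" by (rule dedekind_2)
  also have "\<dots> \<le> inf 1 (a * top) * a"
    by (meson inf.mono order_refl ml_iso mr_iso top_greatest)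
  finally have "a \<le> inf 1 (a * top) * a" by simp
  then have "a * top \<le> inf 1 (a * top) * a * top" by (rule ml_iso)
  also have "\<dots> \<le> inf 1 (a * top) * top"
    by (metis mult.assoc mr_iso top_greatest)
  finally show "a * top \<le> inf 1 (a * top) * top" .
qed

lemma vec_cod: "top * inf 1 (top * a) = top * a"
proof (rule order.antisym)
  show "top * inf 1 (top * a) \<le> top * a"
    by (metis inf.cobounded2 mr_iso mult.assoc top_top)
  have "inf (a * 1) a \<le> a * inf 1 (conv a * a)" by (rule dedekind_1)
  also have "\<dots> \<le> a * inf 1 (top * a)"
    by (meson inf.mono order_refl ml_iso mr_iso top_greatest)
  finally have "a \<le> a * inf 1 (top * a)" by simp
  then have "top * a \<le> top * (a * inf 1 (top * a))" by (rule mr_iso)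
  also have "\<dots> \<le> top * inf 1 (top * a)"
    by (metis mult.assoc ml_iso top_greatest)
  finally show "top * a \<le> top * inf 1 (top * a)" .
qed

lemma atom_dom:
  assumes a: "atom a" shows "atom (inf 1 (a * top))"
proof -
  let ?p = "inf 1 (a * top)"
  have a0: "a \<noteq> bot" and aa: "\<And>y. y \<noteq> bot \<Longrightarrow> y \<le> a \<Longrightarrow> y = a"
    using a unfolding atom_def by auto
  have "?p \<noteq> bot"
  proof
    assume "?p = bot"
    then have "a * top = bot" using vec_dom[of a] by (simp add: mult_bot_left)
    then show False using le_xtop[of a] a0 by (simp add: bot_unique)
  qed
  moreover have "r = ?p" if r0: "r \<noteq> bot" and rp: "r \<le> ?p" for r
  proof -
    have r1: "r \<le> 1" using rp by simp
    have "r = inf (a * top) r" using rp by (simp add: inf.absorb2)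
    also have "\<dots> \<le> inf a (r * conv top) * top" by (rule dedekind_2)
    finally have "r \<le> inf a (r * top) * top" by (simp add: conv_top)
    then have "inf a (r * top) \<noteq> bot" using r0 by (metis mult_bot_left bot_unique)
    then have "inf a (r * top) = a" using aa by simp
    then have "a \<le> r * top" by (metis inf.orderI inf.commute le_infE order_refl)
    then have "a * top \<le> r * top" by (metis ml_iso mult.assoc top_top)
    then have "?p \<le> inf 1 (r * top)" by (simp add: inf.coboundedI2 le_infI1)
    also have "\<dots> \<le> r" using dom_le[OF r1] .
    finally show ?thesis using rp order.antisym by blast
  qed
  ultimately show ?thesis unfolding atom_def by blast
qed

lemma atom_cod:
  assumes a: "atom a" shows "atom (inf 1 (top * a))"
proof -
  let ?p = "inf 1 (top * a)"
  have a0: "a \<noteq> bot" and aa: "\<And>y. y \<noteq> bot \<Longrightarrow> y \<le> a \<Longrightarrow> y = a"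
    using a unfolding atom_def by auto
  have "?p \<noteq> bot"
  proof
    assume "?p = bot"
    then have "top * a = bot" using vec_cod[of a] by (simp add: mult_bot_right)
    then show False using le_topx[of a] a0 by (simp add: bot_unique)
  qed
  moreover have "r = ?p" if r0: "r \<noteq> bot" and rp: "r \<le> ?p" for r
  proof -
    have r1: "r \<le> 1" using rp by simp
    have "r = inf (top * a) r" using rp by (simp add: inf.absorb2)
    also have "\<dots> \<le> top * inf a (conv top * r)" by (rule dedekind_1)
    finally have "r \<le> top * inf a (top * r)" by (simp add: conv_top)
    then have "inf a (top * r) \<noteq> bot" using r0 by (metis mult_bot_right bot_unique)
    then have "inf a (top * r) = a" using aa by simp
    then have "a \<le> top * r" by (metis inf.orderI inf.commute le_infE order_refl)
    then have "top * a \<le> top * r" by (metis mr_iso mult.assoc top_top)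
    then have "?p \<le> inf 1 (top * r)" by (simp add: inf.coboundedI2 le_infI1)
    also have "\<dots> \<le> r" using cod_le[OF r1] .
    finally show ?thesis using rp order.antisym by blast
  qed
  ultimately show ?thesis unfolding atom_def by blast
qed

lemma atomD: "atom a \<Longrightarrow> y \<noteq> bot \<Longrightarrow> y \<le> a \<Longrightarrow> y = a"
  unfolding atom_def by blast
lemma atom_nz: "atom a \<Longrightarrow> a \<noteq> bot"
  unfolding atom_def by blast

lemma rect_eq: "a * top * a \<le> a \<Longrightarrow> inf (a * top) (top * a) = a"
proof (rule order.antisym)
  assume r: "a * top * a \<le> a"
  have "inf (a * top) (top * a) \<le> a * inf top (conv a * (top * a))" by (rule dedekind_1)
  also have "\<dots> \<le> a * (top * a)"
    by (metis inf.cobounded2 le_infI2 mr_iso mult.assoc ml_iso top_greatest)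
  also have "\<dots> \<le> a" using r by (simp add: mult.assoc)
  finally show "inf (a * top) (top * a) \<le> a" .
  show "a \<le> inf (a * top) (top * a)" by (simp add: le_topx le_xtop)
qed

lemma rect_inj:
  assumes "a * top * a \<le> a" "b * top * b \<le> b"
    and "inf 1 (a * top) = inf 1 (b * top)" "inf 1 (top * a) = inf 1 (top * b)"
  shows "a = b"
proof -
  have "a * top = b * top" by (metis assms(3) vec_dom)
  moreover have "top * a = top * b" by (metis assms(4) vec_cod)
  ultimately have "inf (a * top) (top * a) = inf (b * top) (top * b)" by simp
  then show ?thesis using rect_eq[OF assms(1)] rect_eq[OF assms(2)] by simp
qed

lemma vec_inf_le: "inf (p * top) (top * q) \<le> p * top * q"
proof -
  have "inf (p * top) (top * q) \<le> p * inf top (conv p * (top * q))" by (rule dedekind_1)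
  also have "\<dots> \<le> p * (conv p * (top * q))" by (rule mr_iso) simp
  also have "\<dots> \<le> p * (top * (top * q))" by (rule mr_iso, rule ml_iso) simp
  also have "\<dots> = p * top * q" by (simp add: mult.assoc[symmetric] top_top)
  finally show ?thesis .
qed

lemma ptq_nz:
  assumes "top * p * top = top" "top * q * top = top" "p \<noteq> bot"
  shows "p * top * q \<noteq> bot"
proof
  assume "p * top * q = bot"
  then have "top * (p * top * q) * top = bot" by (simp add: mult_bot_left mult_bot_right)
  then have "top * p * top * q * top = bot" by (simp add: mult.assoc)
  then have "top = bot" using assms(1,2) by simp
  then show False using assms(3) by (metis bot_unique top_greatest)
qed

lemma coref_conv: "p \<le> 1 \<Longrightarrow> conv p \<le> p"
proof -
  assume p: "p \<le> 1"
  have c: "conv p \<le> 1" using conv_le_one[OF p] .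
  have "conv p = inf (conv p * 1) 1" using c by (metis inf.absorb1 mult_1_right)
  also have "\<dots> \<le> conv p * inf 1 (conv (conv p) * 1)" by (rule dedekind_1)
  also have "\<dots> \<le> conv p * p" by (rule mr_iso) (simp add: conv_involutive)
  also have "\<dots> \<le> 1 * p" using ml_iso[OF c] .
  finally show ?thesis by simp
qed

lemma dom_of_ptq:
  assumes "p \<le> 1" "top * q * top = top"
  shows "inf 1 (p * top * q * top) = p"
proof -
  have "p * top * q * top = p * (top * q * top)" by (simp only: mult.assoc)
  also have "\<dots> = p * top" by (simp only: assms(2))
  finally have e: "p * top * q * top = p * top" .
  have B: "p \<le> inf 1 (p * top)" using assms(1) le_xtop[of p] by (rule le_infI)
  show ?thesis unfolding e by (rule order.antisym[OF dom_le[OF assms(1)] B])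
qed

lemma cod_of_ptq:
  assumes "q \<le> 1" "top * p * top = top"
  shows "inf 1 (top * (p * top * q)) = q"
proof -
  have "top * (p * top * q) = top * p * top * q" by (simp only: mult.assoc)
  also have "\<dots> = top * q" by (simp only: assms(2))
  finally have e: "top * (p * top * q) = top * q" .
  have B: "q \<le> inf 1 (top * q)" using assms(1) le_topx[of q] by (rule le_infI)
  show ?thesis unfolding e by (rule order.antisym[OF cod_le[OF assms(1)] B])
qed

lemma ptq_atom:
  assumes p: "atom p" "p \<le> 1" "p * top * p \<le> p" "top * p * top = top"
    and q: "atom q" "q \<le> 1" "q * top * q \<le> q" "top * q * top = top"
  shows "atom (p * top * q)"
proof -
  let ?b = "p * top * q"
  have cp: "conv p \<le> p" using coref_conv p(2) .
  have cq: "conv q \<le> q" using coref_conv q(2) .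
  have cb: "conv ?b \<le> q * top * p"
  proof -
    have "conv ?b = conv q * conv top * conv p" by (simp add: conv_mult mult.assoc)
    also have "\<dots> \<le> q * top * p" using cp cq by (simp add: conv_top m_iso)
    finally show ?thesis .
  qed
  have eq: "y = y'" if y: "y \<noteq> bot" "y \<le> ?b" and y': "y' \<noteq> bot" "y' \<le> ?b" for y y'
  proof -
    have "y * conv y \<le> ?b * conv ?b" using m_iso[OF y(2) conv_iso[OF y(2)]] .
    also have "\<dots> \<le> ?b * (q * top * p)" using mr_iso[OF cb] .
    also have "\<dots> = p * (top * q * q * top) * p" by (simp add: mult.assoc)
    also have "\<dots> \<le> p * top * p" by (rule ml_iso, rule mr_iso) simp
    also have "\<dots> \<le> p" using p(3) .
    finally have yy: "y * conv y \<le> p" .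
    have "y * conv y \<noteq> bot"
    proof
      assume "y * conv y = bot"
      then show False using x_le_xcx[of y] y(1) by (simp add: mult_bot_left bot_unique)
    qed
    then have yyp: "y * conv y = p" using atomD[OF p(1)] yy by blast
    have "conv y * y' \<le> conv ?b * ?b" using m_iso[OF conv_iso[OF y(2)] y'(2)] .
    also have "\<dots> \<le> (q * top * p) * ?b" using ml_iso[OF cb] .
    also have "\<dots> = q * (top * p * p * top) * q" by (simp add: mult.assoc)
    also have "\<dots> \<le> q * top * q" by (rule ml_iso, rule mr_iso) simp
    also have "\<dots> \<le> q" using q(3) .
    finally have yq: "conv y * y' \<le> q" .
    have py': "p * y' = y'"
    proof (rule order.antisym)
      show "p * y' \<le> y'" using ml_iso[OF p(2)] by simp
      have "p * top * q = p * (top * q)" by (simp add: mult.assoc)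
      also have "\<dots> \<le> p * top" by (rule mr_iso) simp
      finally have "y' \<le> p * top" using y'(2) by simp
      then have "y' = inf (p * top) y'" by (simp add: inf.absorb2)
      also have "\<dots> \<le> p * inf top (conv p * y')" by (rule dedekind_1)
      also have "\<dots> \<le> p * (conv p * y')" by (simp add: mr_iso)
      also have "\<dots> \<le> p * (1 * y')" using mr_iso[OF ml_iso[OF conv_le_one[OF p(2)]]] by blast
      finally show "y' \<le> p * y'" by simp
    qed
    have yq2: "y * q = y"
    proof (rule order.antisym)
      show "y * q \<le> y" using mr_iso[OF q(2)] by simp
      have "p * top * q \<le> top * q" by (rule ml_iso) simp
      then have "y \<le> top * q" using y(2) by simp
      then have "y = inf (top * q) y" by (simp add: inf.absorb2)
      also have "\<dots> \<le> inf top (y * conv q) * q" by (rule dedekind_2)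
      also have "\<dots> \<le> (y * conv q) * q" by (simp add: ml_iso)
      also have "\<dots> \<le> (y * 1) * q" using ml_iso[OF mr_iso[OF conv_le_one[OF q(2)]]] by blast
      finally show "y \<le> y * q" by simp
    qed
    have "conv y * y' \<noteq> bot"
    proof
      assume "conv y * y' = bot"
      then have "y * conv y * y' = bot" by (simp add: mult.assoc mult_bot_right)
      then show False using yyp py' y'(1) by simp
    qed
    then have "conv y * y' = q" using atomD[OF q(1)] yq by blast
    then have "y = y * conv y * y'" using yq2 by (simp add: mult.assoc)
    also have "\<dots> = y'" using yyp py' by simp
    finally show ?thesis .
  qed
  have "?b \<noteq> bot" using ptq_nz p(4) q(4) atom_nz[OF p(1)] by blast
  then show ?thesis unfolding atom_def using eq by blast
qed

lemma atom_regular: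
  assumes a: "atom a" "a * top * a \<le> a"
    and p: "inf 1 (a * top) * top * inf 1 (a * top) \<le> inf 1 (a * top)"
           "top * inf 1 (a * top) * top = top"
    and q: "inf 1 (top * a) * top * inf 1 (top * a) \<le> inf 1 (top * a)"
           "top * inf 1 (top * a) * top = top"
  shows "- (- a) \<le> a"
proof -
  let ?p = "inf 1 (a * top)" and ?q = "inf 1 (top * a)"
  have rp: "- (- ?p) = ?p" using regular_coreflexive[OF _ p] pp_inc by (simp add: order.antisym)
  have rq: "- (- ?q) = ?q" using regular_coreflexive[OF _ q] pp_inc by (simp add: order.antisym)
  have e: "?p * top * ?q = a"
  proof (rule order.antisym)
    have "?p * top * ?q = ?p * (top * ?q)" by (simp add: mult.assoc)
    also have "\<dots> \<le> ?p * top" by (rule mr_iso) simp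
    finally have 1: "?p * top * ?q \<le> ?p * top" .
    have 2: "?p * top * ?q \<le> top * ?q" by (rule ml_iso) simp
    have "?p * top * ?q \<le> inf (?p * top) (top * ?q)" using 1 2 by simp
    also have "\<dots> = inf (a * top) (top * a)" by (simp add: vec_dom vec_cod)
    also have "\<dots> = a" using rect_eq[OF a(2)] .
    finally show "?p * top * ?q \<le> a" .
    have "a = inf (a * top) (top * a)" using rect_eq[OF a(2)] by simp
    also have "\<dots> = inf (?p * top) (top * ?q)" by (simp add: vec_dom vec_cod)
    also have "\<dots> \<le> ?p * top * ?q" by (rule vec_inf_le)
    finally show "a \<le> ?p * top * ?q" .
  qed
  have "- (- a) = - (- (?p * top * ?q))" using e by simp
  also have "\<dots> = - (- ?p) * - (- top) * - (- ?q)" by (simp add: pp_mult)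
  also have "\<dots> = a" using rp rq pp_top e by simp
  finally show ?thesis by simp
qed

lemma unique_atom_le:
  assumes atomic: "\<forall>x. x \<noteq> bot \<longrightarrow> (\<exists>a. atom a \<and> a \<le> x)"
    and u: "{b. atom b \<and> b \<le> x} = {a}"
  shows "x \<le> - (- a)"
proof -
  have ax: "atom a" "a \<le> x" using u by auto
  have "inf x (- a) = bot"
  proof (rule ccontr)
    assume "inf x (- a) \<noteq> bot"
    then obtain b where b: "atom b" "b \<le> inf x (- a)" using atomic by blast
    then have "b \<in> {b. atom b \<and> b \<le> x}" by simp
    then have "b = a" using u by blast
    then have "a \<le> inf a (- a)" using b by simp
    then show False using inf_p[of a] atom_nz[OF ax(1)] by (simp add: bot_unique)
  qed
  then show ?thesis using pseudo_complement by blast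
qed

lemma count_atom_iff:
  assumes h: "\<And>x a. {b. atom b \<and> b \<le> x} = {a} \<Longrightarrow> x \<le> a"
  shows "atom x \<longleftrightarrow> atom_count x = 1"
proof
  assume ax: "atom x"
  have "{b. atom b \<and> b \<le> x} = {x}" using ax atomD atom_nz by blast
  then show "atom_count x = 1" unfolding atom_count_def by (simp add: one_enat_def)
next
  assume c: "atom_count x = 1"
  let ?S = "{b. atom b \<and> b \<le> x}"
  have "finite ?S \<and> card ?S = 1"
  proof (cases "finite ?S")
    case True
    then show ?thesis using c unfolding atom_count_def by (simp add: one_enat_def)
  next
    case False
    then show ?thesis using c unfolding atom_count_def by simp
  qed
  then obtain a where S: "?S = {a}" using card_1_singletonE by blast
  then have "atom a" "a \<le> x" by auto
  moreover have "x \<le> a" using h[OF S] .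
  ultimately show "atom x" by (metis order.antisym)
qed

lemma atom_below_ptq:
  assumes a: "atom a" "a \<le> p * top * q" and p: "atom p" "p \<le> 1" and q: "atom q" "q \<le> 1"
  shows "inf 1 (a * top) = p \<and> inf 1 (top * a) = q"
proof
  have "a * top \<le> p * top * q * top" using ml_iso[OF a(2)] .
  also have "\<dots> = p * (top * q * top)" by (simp only: mult.assoc)
  also have "\<dots> \<le> p * top" by (rule mr_iso) simp
  finally have "inf 1 (a * top) \<le> inf 1 (p * top)" by (simp add: le_infI2)
  also have "\<dots> \<le> p" using dom_le[OF p(2)] .
  finally show "inf 1 (a * top) = p" using atomD[OF p(1)] atom_nz[OF atom_dom[OF a(1)]] by blast
  have "top * a \<le> top * (p * top * q)" using mr_iso[OF a(2)] .
  also have "\<dots> = (top * p * top) * q" by (simp only: mult.assoc)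
  also have "\<dots> \<le> top * q" by (rule ml_iso) simp
  finally have "inf 1 (top * a) \<le> inf 1 (top * q)" by (simp add: le_infI2)
  also have "\<dots> \<le> q" using cod_le[OF q(2)] .
  finally show "inf 1 (top * a) = q" using atomD[OF q(1)] atom_nz[OF atom_cod[OF a(1)]] by blast
qed

lemma part3:
  assumes rect: "\<forall>a. atom a \<longrightarrow> a * top * a \<le> a"
  shows "atom_count top \<le> atom_count 1 * atom_count 1"
proof -
  let ?A = "{a. atom a \<and> a \<le> top}" and ?D = "{a. atom a \<and> a \<le> 1}"
  let ?f = "\<lambda>a. (inf 1 (a * top), inf 1 (top * a))"
  have inj: "inj_on ?f ?A"
    by (rule inj_onI) (use rect rect_inj in blast)
  have sub: "?f ` ?A \<subseteq> ?D \<times> ?D"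
    using atom_dom atom_cod by auto
  show ?thesis
  proof (cases "finite ?D")
    case True
    then have fD: "finite (?D \<times> ?D)" by simp
    then have fA: "finite ?A" using sub inj finite_imageD finite_subset by blast
    have "card ?A = card (?f ` ?A)" using card_image[OF inj] by simp
    also have "\<dots> \<le> card (?D \<times> ?D)" using card_mono[OF fD sub] .
    also have "\<dots> = card ?D * card ?D" by (simp add: card_cartesian_product)
    finally have "card ?A \<le> card ?D * card ?D" .
    then show ?thesis using True fA unfolding atom_count_def by simp
  next
    case False
    then show ?thesis unfolding atom_count_def by simp
  qed
qed

lemma part5:
  assumes rect: "\<forall>a. atom a \<longrightarrow> a * top * a \<le> a"
    and simp: "\<forall>a. atom a \<longrightarrow> top * a * top = top"
  shows "atom_count top = atom_count 1 * atom_count 1"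
proof -
  let ?A = "{a. atom a \<and> a \<le> top}" and ?D = "{a. atom a \<and> a \<le> 1}"
  let ?f = "\<lambda>a. (inf 1 (a * top), inf 1 (top * a))"
  have inj: "inj_on ?f ?A"
    by (rule inj_onI) (use rect rect_inj in blast)
  have sub: "?f ` ?A \<subseteq> ?D \<times> ?D"
    using atom_dom atom_cod by auto
  have sup: "?D \<times> ?D \<subseteq> ?f ` ?A"
  proof
    fix pq assume "pq \<in> ?D \<times> ?D"
    then obtain p q where pq: "pq = (p, q)" "atom p" "p \<le> 1" "atom q" "q \<le> 1" by auto
    have b: "atom (p * top * q)"
      using ptq_atom pq rect simp by blast
    have "?f (p * top * q) = (p, q)"
      using dom_of_ptq[of p q] cod_of_ptq[of q p] pq simp by simp
    then show "pq \<in> ?f ` ?A" using b pq(1) by (metis (mono_tags, lifting) mem_Collect_eq rev_image_eqI top_greatest)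
  qed
  have bij: "bij_betw ?f ?A (?D \<times> ?D)"
    using inj sub sup by (simp add: bij_betw_def)
  show ?thesis
  proof (cases "finite ?D")
    case True
    then have fD: "finite (?D \<times> ?D)" by simp
    then have fA: "finite ?A" using bij bij_betw_finite by blast
    have "card ?A = card (?D \<times> ?D)" using bij_betw_same_card[OF bij] .
    also have "\<dots> = card ?D * card ?D" by (simp add: card_cartesian_product)
    finally have "card ?A = card ?D * card ?D" .
    then show ?thesis using True fA unfolding atom_count_def by simp
  next
    case False
    have "?D \<subseteq> ?A" by auto
    then have "infinite ?A" using False finite_subset by blast
    then show ?thesis using False unfolding atom_count_def by simp
  qed
qed

lemma part4:
  assumes atomic: "\<forall>x. x \<noteq> bot \<longrightarrow> (\<exists>a. atom a \<and> a \<le> x)"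
    and simp: "\<forall>x. x \<noteq> bot \<longrightarrow> top * x * top = top"
    and fin: "finite {a. atom a}"
  shows "atom_count top \<ge> atom_count 1 * atom_count 1"
proof -
  let ?A = "{a. atom a \<and> a \<le> top}" and ?D = "{a. atom a \<and> a \<le> 1}"
  let ?f = "\<lambda>a. (inf 1 (a * top), inf 1 (top * a))"
  let ?g = "\<lambda>pq. SOME a. atom a \<and> a \<le> fst pq * top * snd pq"
  have fA: "finite ?A" using fin by (simp add: finite_subset)
  have fD: "finite ?D" using fin by (simp add: finite_subset)
  have g: "atom (?g pq) \<and> ?g pq \<le> fst pq * top * snd pq \<and> ?f (?g pq) = pq" if "pq \<in> ?D \<times> ?D" for pq
  proof -
    obtain p q where pq0: "pq = (p, q)" by (cases pq)
    have pq: "pq = (p, q)" "atom p" "p \<le> 1" "atom q" "q \<le> 1" using that pq0 by auto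
    have "p * top * q \<noteq> bot"
      using ptq_nz[of p q] simp atom_nz pq by blast
    then have "\<exists>a. atom a \<and> a \<le> fst pq * top * snd pq" using atomic pq(1) by simp
    then have a: "atom (?g pq) \<and> ?g pq \<le> fst pq * top * snd pq" by (rule someI_ex)
    then show ?thesis using atom_below_ptq[of "?g pq" p q] pq by simp
  qed
  have inj: "inj_on ?g (?D \<times> ?D)"
    by (rule inj_on_inverseI[where g = ?f]) (use g in blast)
  have sub: "?g ` (?D \<times> ?D) \<subseteq> ?A" using g by auto
  have "card ?D * card ?D = card (?D \<times> ?D)" by (simp add: card_cartesian_product)
  also have "\<dots> \<le> card ?A" using card_inj_on_le[OF inj sub fA] .
  finally show ?thesis using fA fD unfolding atom_count_def by simp
qed

lemma part6:
  assumes fin: "finite {a. atom a}"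
  shows "atom_count top \<noteq> \<infinity>"
  using fin unfolding atom_count_def by (simp add: finite_subset)

lemma part1:
  assumes atomic: "\<forall>x. x \<noteq> bot \<longrightarrow> (\<exists>a. atom a \<and> a \<le> x)"
    and rect: "\<forall>a. atom a \<longrightarrow> a * top * a \<le> a"
    and simp: "\<forall>x. x \<noteq> bot \<longrightarrow> top * x * top = top"
  shows "atom x \<longleftrightarrow> atom_count x = 1"
proof (rule count_atom_iff)
  fix x a assume S: "{b. atom b \<and> b \<le> x} = {a}"
  then have a: "atom a" by auto
  have "x \<le> - (- a)" using unique_atom_le[OF atomic S] .
  also have "\<dots> \<le> a"
  proof (rule atom_regular)
    show "atom a" by fact
    show "a * top * a \<le> a" using rect a by blast
    have pa: "atom (inf 1 (a * top))" using atom_dom[OF a] .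
    have qa: "atom (inf 1 (top * a))" using atom_cod[OF a] .
    show "inf 1 (a * top) * top * inf 1 (a * top) \<le> inf 1 (a * top)" using rect pa by blast
    show "top * inf 1 (a * top) * top = top" using simp pa atom_nz by blast
    show "inf 1 (top * a) * top * inf 1 (top * a) \<le> inf 1 (top * a)" using rect qa by blast
    show "top * inf 1 (top * a) * top = top" using simp qa atom_nz by blast
  qed
  finally show "x \<le> a" .
qed

lemma part2:
  assumes atomic: "\<forall>x. x \<noteq> bot \<longrightarrow> (\<exists>a. atom a \<and> a \<le> x)"
    and reg: "\<forall>x. - (- x) = x"
  shows "atom x \<longleftrightarrow> atom_count x = 1"
proof (rule count_atom_iff)
  fix x a assume S: "{b. atom b \<and> b \<le> x} = {a}"
  have "x \<le> - (- a)" using unique_atom_le[OF atomic S] .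
  then show "x \<le> a" using reg by simp
qed

end

theorem mainTheorem5:
  shows "(atomic_alg TYPE('a::stone_relation_algebra) \<and> atom_rectangular TYPE('a) \<and> simple_alg TYPE('a)
            \<longrightarrow> (\<forall>x::'a. atom x \<longleftrightarrow> atom_count x = 1))
       \<and> (atomic_alg TYPE('a) \<and> relation_algebra TYPE('a)
            \<longrightarrow> (\<forall>x::'a. atom x \<longleftrightarrow> atom_count x = 1))
       \<and> (atom_rectangular TYPE('a) \<longrightarrow> atom_count (top::'a) \<le> (atom_count (1::'a))\<^sup>2)
       \<and> (atomic_alg TYPE('a) \<and> simple_alg TYPE('a) \<and> finitely_many_atoms TYPE('a)
            \<longrightarrow> atom_count (top::'a) \<ge> (atom_count (1::'a))\<^sup>2)
       \<and> (atom_rectangular TYPE('a) \<and> atom_simple TYPE('a)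
            \<longrightarrow> atom_count (top::'a) = (atom_count (1::'a))\<^sup>2)
       \<and> (finitely_many_atoms TYPE('a) \<longrightarrow> atom_count (top::'a) \<noteq> \<infinity>)"
proof -
  have atomic: "atomic_alg TYPE('a) \<longleftrightarrow> (\<forall>x::'a. x \<noteq> bot \<longrightarrow> (\<exists>a. atom a \<and> a \<le> x))"
    by (simp add: atomic_alg_def)
  have rect: "atom_rectangular TYPE('a) \<longleftrightarrow> (\<forall>a::'a. atom a \<longrightarrow> a * top * a \<le> a)"
    by (simp add: atom_rectangular_def rectangle_def)
  have asimp: "atom_simple TYPE('a) \<longleftrightarrow> (\<forall>a::'a. atom a \<longrightarrow> top * a * top = top)"
    by (simp add: atom_simple_def simple_def)
  have ssimp: "simple_alg TYPE('a) \<longleftrightarrow> (\<forall>x::'a. x \<noteq> bot \<longrightarrow> top * x * top = top)"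
    by (simp add: simple_alg_def simple_def)
  have ra: "relation_algebra TYPE('a) \<longleftrightarrow> (\<forall>x::'a. - (- x) = x)"
    by (simp add: relation_algebra_def)
  have fa: "finitely_many_atoms TYPE('a) \<longleftrightarrow> finite {a::'a. atom a}"
    by (simp add: finitely_many_atoms_def)
  show ?thesis
    unfolding atomic rect asimp ssimp ra fa power2_eq_square
    using part1 part2 part3 part4 part5 part6 by blast
qed

end
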